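(* Let $(A,+)$ be a subsemigroup of the additive semigroup $(\mathbb{R},+)$ such that $0\in A\ne\{0\}$. For every finite set $S=\{0=s_0<s_1<\dots<s_k\}\subseteq A$ there exists a finite tight set $T=\{0=t_0<t_1<\dots<t_\ell\}\subseteq A$ such that $S\subseteq T$, $t_1=s_1$ and $t_\ell=s_k$.
   Context: A finite set $T=\{0=t_0<t_1<\dots<t_\ell\}\subseteq\mathbb{R}$ of nonnegative reals is tight if $t_{i+j}\le t_i+t_j$ for all $i,j$ with $0\le i\le j\le i+j\le\ell$. *)

theory Defs
  imports Main Complex_Main
begin

definition tight :: "real set \<Rightarrow> bool" where
  "tight T \<longleftrightarrow> finite T \<and> 0 \<in> T \<and> (\<forall>t\<in>T. 0 \<le> t) \<and>
     (\<forall>i j. i \<le> j \<and> i + j < card T \<longrightarrow>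
        sorted_list_of_set T ! (i + j) \<le> sorted_list_of_set T ! i + sorted_list_of_set T ! j)"

end

theory Submission
  imports Defs
begin

lemma tight_closed:
  fixes T :: "real set" and m :: real
  assumes fin: "finite T" and T0: "0 \<in> T" and nn: "\<forall>t\<in>T. 0 \<le> t"
    and mx: "\<forall>t\<in>T. t \<le> m"
    and cl: "\<And>x y. x \<in> T \<Longrightarrow> y \<in> T \<Longrightarrow> x + y \<le> m \<Longrightarrow> x + y \<in> T"
  shows "tight T"
  unfolding tight_def
proof (intro conjI fin T0 nn allI impI)
  fix i j assume ij: "i \<le> j \<and> i + j < card T"
  define L where "L = sorted_list_of_set T"
  have len: "length L = card T" unfolding L_def by simp
  have setL: "set L = T" unfolding L_def using fin by simp
  have ss: "sorted_wrt (<) L" unfolding L_def by (rule strict_sorted_list_of_set)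
  have lt: "\<And>a b. a < b \<Longrightarrow> b < length L \<Longrightarrow> L!a < L!b"
    using ss sorted_wrt_nth_less by blast
  have le: "\<And>a b. a \<le> b \<Longrightarrow> b < length L \<Longrightarrow> L!a \<le> L!b"
    using lt by (metis order.order_iff_strict)
  have inT: "\<And>a. a < length L \<Longrightarrow> L!a \<in> T" using setL nth_mem by blast
  define v where "v = L!i + L!j"
  show "L ! (i + j) \<le> L ! i + L ! j"
  proof (rule ccontr)
    assume "\<not> ?thesis"
    hence gt: "L!(i+j) > v" unfolding v_def by simp
    have vm: "v \<le> m" using gt mx inT ij len by fastforce
    define f where "f k = (if k < i then L!k else L!i + L!(k-i))" for k
    have fin2: "finite (T \<inter> {..v})" using fin by simp
    have sub1: "f ` {..i+j} \<subseteq> T \<inter> {..v}"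
    proof
      fix y assume "y \<in> f ` {..i+j}"
      then obtain k where k: "k \<le> i+j" "y = f k" by auto
      show "y \<in> T \<inter> {..v}"
      proof (cases "k < i")
        case True
        then have "L!k \<le> L!i" using le ij len by simp
        moreover have "0 \<le> L!j" using nn inT ij len by simp
        ultimately show ?thesis using True k inT ij len unfolding f_def v_def by auto
      next
        case False
        have a: "L!(k-i) \<le> L!j" using le False k ij len by simp
        have b: "L!i + L!(k-i) \<le> v" using a unfolding v_def by simp
        have "L!i \<in> T" "L!(k-i) \<in> T" using inT ij len False k by auto
        then have "L!i + L!(k-i) \<in> T" using cl b vm by simp
        then show ?thesis using False k b unfolding f_def by auto
      qed
    qed
    have inj: "inj_on f {..i+j}"
    proof (rule inj_onI)
      fix a b assume a: "a \<in> {..i+j}" and b: "b \<in> {..i+j}" and e: "f a = f b"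
      have mono: "\<And>a b. a < b \<Longrightarrow> b \<le> i+j \<Longrightarrow> f a < f b"
      proof -
        fix a b :: nat assume ab: "a < b" "b \<le> i+j"
        have nnj: "\<And>c. c < length L \<Longrightarrow> 0 \<le> L!c" using nn inT by blast
        show "f a < f b"
        proof (cases "b < i")
          case True then show ?thesis using ab lt ij len unfolding f_def by simp
        next
          case bF: False
          show ?thesis
          proof (cases "a < i")
            case True
            have "L!a < L!i" using lt True ij len by simp
            moreover have "b - i < length L" using ab ij len by linarith
            then have "0 \<le> L!(b-i)" using nnj by blast
            ultimately show ?thesis using True bF unfolding f_def by simp
          next
            case False
            have "a - i < b - i" "b - i < length L" using False bF ab ij len by linarith+
            then have "L!(a-i) < L!(b-i)" using lt by blast
            then show ?thesis using False bF unfolding f_def by simp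
          qed
        qed
      qed
      show "a = b"
      proof (rule ccontr)
        assume "a \<noteq> b"
        then consider "a < b" | "b < a" by linarith
        then show False using mono a b e by (cases, fastforce+)
      qed
    qed
    have c1: "card (f ` {..i+j}) = i+j+1" using card_image[OF inj] by simp
    have c2: "card (f ` {..i+j}) \<le> card (T \<inter> {..v})" using card_mono[OF fin2 sub1] .
    have sub2: "T \<inter> {..v} \<subseteq> (\<lambda>k. L!k) ` {..<i+j}"
    proof
      fix t assume t: "t \<in> T \<inter> {..v}"
      then obtain k where k: "k < length L" "t = L!k" using setL by (metis IntD1 in_set_conv_nth)
      have "k < i + j"
      proof (rule ccontr)
        assume "\<not> k < i+j"
        then have "L!(i+j) \<le> L!k" using le k by simp
        then show False using t k gt by auto
      qed
      then show "t \<in> (\<lambda>k. L!k) ` {..<i+j}" using k by auto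
    qed
    have "card (T \<inter> {..v}) \<le> card ((\<lambda>k. L!k) ` {..<i+j})" using card_mono[OF _ sub2] by simp
    also have "\<dots> \<le> i+j" using card_image_le[of "{..<i+j}" "\<lambda>k. L!k"] by simp
    finally show False using c1 c2 by simp
  qed
qed

lemma sorted_one:
  fixes X :: "real set"
  assumes fin: "finite X" and X0: "0 \<in> X" and nn: "\<forall>x\<in>X. 0 \<le> x" and ne: "X - {0} \<noteq> {}"
  shows "sorted_list_of_set X ! 1 = Min (X - {0})"
proof -
  have m: "Min X = 0" using fin X0 nn by (metis Min_le antisym Min_in empty_iff)
  have "sorted_list_of_set X = 0 # sorted_list_of_set (X - {0})"
    using sorted_list_of_set_nonempty[OF fin] X0 m by auto
  moreover have "sorted_list_of_set (X - {0}) = Min (X - {0}) # sorted_list_of_set (X - {0} - {Min (X - {0})})"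
    using sorted_list_of_set_nonempty[of "X - {0}"] fin ne by auto
  ultimately show ?thesis by simp
qed

primrec ssums :: "real set \<Rightarrow> nat \<Rightarrow> real set" where
  "ssums S 0 = {0}"
| "ssums S (Suc n) = (\<lambda>p. fst p + snd p) ` (ssums S n \<times> S)"

lemma ssums_finite: "finite S \<Longrightarrow> finite (ssums S n)"
  by (induction n) auto

lemma ssums_sub:
  assumes "\<And>x y. x \<in> A \<Longrightarrow> y \<in> A \<Longrightarrow> x + y \<in> A" "0 \<in> A" "S \<subseteq> A"
  shows "ssums S n \<subseteq> A"
  using assms by (induction n) force+

lemma ssums_Suc: "0 \<in> S \<Longrightarrow> ssums S n \<subseteq> ssums S (Suc n)"
  by (force simp: image_iff)

lemma ssums_mono: "0 \<in> S \<Longrightarrow> n \<le> k \<Longrightarrow> ssums S n \<subseteq> ssums S k"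
  using lift_Suc_mono_le[of "ssums S"] ssums_Suc by blast

lemma ssums_add: "x \<in> ssums S a \<Longrightarrow> y \<in> ssums S b \<Longrightarrow> x + y \<in> ssums S (a + b)"
proof (induction b arbitrary: y)
  case 0 then show ?case by simp
next
  case (Suc b)
  then obtain y' s where "y' \<in> ssums S b" "s \<in> S" "y = y' + s" by auto
  then have "x + y' \<in> ssums S (a + b)" using Suc by blast
  then have "(x + y') + s \<in> ssums S (Suc (a + b))" using \<open>s \<in> S\<close> by (force simp: image_iff)
  then show ?case using \<open>y = y' + s\<close> by (simp add: add.assoc)
qed

lemma ssums_count:
  assumes s1: "s1 > 0" and S: "\<forall>s\<in>S. s = 0 \<or> s1 \<le> s"
  shows "x \<in> ssums S n \<Longrightarrow> \<exists>k. x \<in> ssums S k \<and> real k * s1 \<le> x"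
proof (induction n arbitrary: x)
  case 0 then show ?case by (intro exI[of _ 0]) simp
next
  case (Suc n)
  then obtain y s where ys: "y \<in> ssums S n" "s \<in> S" "x = y + s" by auto
  obtain k where k: "y \<in> ssums S k" "real k * s1 \<le> y" using Suc ys by blast
  show ?case
  proof (cases "s = 0")
    case True then show ?thesis using k ys by auto
  next
    case False
    then have "s1 \<le> s" using S ys by auto
    moreover have "x \<in> ssums S (Suc k)" using k ys by (force simp: image_iff)
    ultimately show ?thesis using k ys by (intro exI[of _ "Suc k"]) (auto simp: algebra_simps)
  qed
qed

theorem lemma4p3:
  fixes A S :: "real set"
  assumes A_add: "\<And>x y. x \<in> A \<Longrightarrow> y \<in> A \<Longrightarrow> x + y \<in> A"
    and A0: "0 \<in> A"
    and A_nontriv: "A \<noteq> {0}"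
    and S_fin: "finite S"
    and S_sub: "S \<subseteq> A"
    and S0: "0 \<in> S"
    and S_nonneg: "\<forall>s\<in>S. 0 \<le> s"
    and S_card: "card S \<ge> 2"
  shows "\<exists>T. tight T \<and> T \<subseteq> A \<and> S \<subseteq> T \<and>
           sorted_list_of_set T ! 1 = sorted_list_of_set S ! 1 \<and>
           Max T = Max S"
proof -
  have neS: "S - {0} \<noteq> {}"
  proof
    assume "S - {0} = {}"
    then have "S \<subseteq> {0}" by blast
    then have "card S \<le> 1" using card_mono[of "{0}" S] by simp
    then show False using S_card by simp
  qed
  define s1 where "s1 = Min (S - {0})"
  have s1S: "s1 \<in> S - {0}" unfolding s1_def using S_fin neS by (intro Min_in) auto
  have s1pos: "s1 > 0" using s1S S_nonneg by force
  have s1min: "\<forall>s\<in>S. s = 0 \<or> s1 \<le> s" unfolding s1_def using S_fin by (metis Diff_iff Min_le finite_Diff singletonD)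
  have S1: "sorted_list_of_set S ! 1 = s1" unfolding s1_def using sorted_one S_fin S0 S_nonneg neS by blast
  define m where "m = Max S"
  have mS: "m \<in> S" unfolding m_def using S_fin S0 by (intro Max_in) auto
  have Sm: "\<forall>s\<in>S. s \<le> m" unfolding m_def using S_fin by auto
  define N where "N = nat \<lfloor>m / s1\<rfloor>"
  have cnt: "\<And>x n. x \<in> ssums S n \<Longrightarrow> \<exists>k. x \<in> ssums S k \<and> real k * s1 \<le> x"
    using ssums_count[OF s1pos s1min] by blast
  have red: "\<And>x n. x \<in> ssums S n \<Longrightarrow> x \<le> m \<Longrightarrow> x \<in> ssums S N"
  proof -
    fix x n assume x: "x \<in> ssums S n" "x \<le> m"
    obtain k where k: "x \<in> ssums S k" "real k * s1 \<le> x" using cnt[OF x(1)] by blast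
    have "real k * s1 \<le> m" using k x by linarith
    then have "real k \<le> m / s1" using s1pos by (simp add: field_simps)
    then have "k \<le> N" unfolding N_def by linarith
    then show "x \<in> ssums S N" using ssums_mono[OF S0] k by blast
  qed
  have pos: "\<And>x n. x \<in> ssums S n \<Longrightarrow> x = 0 \<or> s1 \<le> x"
  proof -
    fix x n assume "x \<in> ssums S n"
    then obtain k where k: "x \<in> ssums S k" "real k * s1 \<le> x" using cnt by blast
    show "x = 0 \<or> s1 \<le> x"
    proof (cases k)
      case 0 then show ?thesis using k by simp
    next
      case (Suc k')
      then have "s1 \<le> real k * s1" using s1pos by simp
      then show ?thesis using k by linarith
    qed
  qed
  define T where "T = {x \<in> ssums S N. x \<le> m}"
  have Tfin: "finite T" unfolding T_def using ssums_finite[OF S_fin] by simp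
  have ST: "S \<subseteq> T"
  proof
    fix s assume s: "s \<in> S"
    have "s \<in> ssums S 1" using s by (force simp: image_iff)
    moreover have "s \<le> m" using Sm s by blast
    ultimately show "s \<in> T" unfolding T_def using red by blast
  qed
  have T0: "0 \<in> T" using ST S0 by blast
  have Tnn: "\<forall>t\<in>T. 0 \<le> t" unfolding T_def using pos s1pos by fastforce
  have Tm: "\<forall>t\<in>T. t \<le> m" unfolding T_def by simp
  have Tcl: "\<And>x y. x \<in> T \<Longrightarrow> y \<in> T \<Longrightarrow> x + y \<le> m \<Longrightarrow> x + y \<in> T"
    unfolding T_def using ssums_add red by blast
  have tT: "tight T" using tight_closed[OF Tfin T0 Tnn Tm Tcl] .
  have TA: "T \<subseteq> A" unfolding T_def using ssums_sub[OF A_add A0 S_sub] by blast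
  have neT: "T - {0} \<noteq> {}" using s1S ST by blast
  have "Min (T - {0}) = s1"
  proof (rule Min_eqI)
    show "finite (T - {0})" using Tfin by simp
    show "s1 \<in> T - {0}" using s1S ST by blast
    fix y assume "y \<in> T - {0}"
    then show "s1 \<le> y" unfolding T_def using pos by auto
  qed
  then have T1: "sorted_list_of_set T ! 1 = s1" using sorted_one[OF Tfin T0 Tnn neT] by simp
  have "Max T = m"
    using Tfin Tm ST mS by (intro Max_eqI) auto
  then show ?thesis using tT TA ST T1 S1 unfolding m_def by auto
qed

end
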